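(* Consider an episodic RMDP with horizon $H$, rewards $R_h:\mathcal{S}\times\mathcal{A}\to[0,1]$, and $\mathcal{S}\times\mathcal{A}$-rectangular total-variation robust sets of radius $\rho\in[0,1)$. Then for any collection of transition kernels $P=\{P_h\}_{h=1}^H$, any Markov policy $\pi$, and any step $h\in[H]$, $$\max_{(s,a)}Q^\pi_{h,P,\boldsymbol{\Phi}}(s,a)-\min_{(s,a)}Q^\pi_{h,P,\boldsymbol{\Phi}}(s,a)\le\min\{H,\rho^{-1}\},\qquad \max_{s}V^\pi_{h,P,\boldsymbol{\Phi}}(s)-\min_{s}V^\pi_{h,P,\boldsymbol{\Phi}}(s)\le\min\{H,\rho^{-1}\}.$$
   Context: $\mathcal{S},\mathcal{A}$ finite. For a kernel $P_h$ the TV robust set is $\boldsymbol{\Phi}(P_h)=\bigotimes_{(s,a)}\mathcal{P}_\rho(s,a;P_h)$, $\mathcal{P}_\rho(s,a;P_h)=\{\widetilde P\in\Delta(\mathcal{S}):\frac12\sum_{s'}|\widetilde P(s')-P_h(s'|s,a)|\le\rho\}$. For a Markov policy $\pi=\{\pi_h\}$, $\pi_h:\mathcal{S}\to\Delta(\mathcal{A})$, the robust value functions are $V^\pi_{h,P,\boldsymbol{\Phi}}(s)=\inf\mathbb{E}_{\{\widetilde P_i\},\pi}[\sum_{i=h}^HR_i(s_i,a_i)\mid s_h=s]$ and $Q^\pi_{h,P,\boldsymbol{\Phi}}(s,a)=\inf\mathbb{E}_{\{\widetilde P_i\},\pi}[\sum_{i=h}^HR_i(s_i,a_i)\mid s_h=s,a_h=a]$,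 infima over all choices $\widetilde P_i(\cdot|s',a')\in\mathcal{P}_\rho(s',a';P_i)$. $\rho^{-1}=\infty$ when $\rho=0$. *)

theory Defs
  imports Complex_Main
begin

(* Kernels: P h s a s' = P_h(s'|s,a); policy: pol h s a = pi_h(a|s); rewards R h s a.
   Steps are indexed h = 1..H. *)

definition is_dist :: "('s::finite \<Rightarrow> real) \<Rightarrow> bool" where
  "is_dist q \<longleftrightarrow> (\<forall>x. 0 \<le> q x) \<and> (\<Sum>x\<in>UNIV. q x) = 1"

definition TV_ball :: "real \<Rightarrow> ('s::finite \<Rightarrow> real) \<Rightarrow> ('s \<Rightarrow> real) set" where
  "TV_ball \<rho> p = {q. is_dist q \<and> (1/2) * (\<Sum>x\<in>UNIV. \<bar>q x - p x\<bar>) \<le> \<rho>}"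

definition robust_kernels ::
  "nat \<Rightarrow> real \<Rightarrow> (nat \<Rightarrow> 's::finite \<Rightarrow> 'a \<Rightarrow> 's \<Rightarrow> real) \<Rightarrow> (nat \<Rightarrow> 's \<Rightarrow> 'a \<Rightarrow> 's \<Rightarrow> real) set" where
  "robust_kernels H \<rho> P = {Pt. \<forall>i\<in>{1..H}. \<forall>s a. Pt i s a \<in> TV_ball \<rho> (P i s a)}"

primrec V_tail ::
  "(nat \<Rightarrow> 's::finite \<Rightarrow> 'a::finite \<Rightarrow> real) \<Rightarrow> (nat \<Rightarrow> 's \<Rightarrow> 'a \<Rightarrow> real) \<Rightarrow>
   (nat \<Rightarrow> 's \<Rightarrow> 'a \<Rightarrow> 's \<Rightarrow> real) \<Rightarrow> nat \<Rightarrow> nat \<Rightarrow> 's \<Rightarrow> real" where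
  "V_tail R pol Pt 0 h s = 0"
| "V_tail R pol Pt (Suc n) h s =
     (\<Sum>a\<in>UNIV. pol h s a * (R h s a + (\<Sum>s'\<in>UNIV. Pt h s a s' * V_tail R pol Pt n (Suc h) s')))"

(* E_{Pt,pi}[ sum_{i=h}^H R_i(s_i,a_i) | s_h = s ] *)
definition V_eval where
  "V_eval H R pol Pt h s = V_tail R pol Pt (Suc H - h) h s"

definition Q_eval where
  "Q_eval H R pol Pt h s a = R h s a + (\<Sum>s'\<in>UNIV. Pt h s a s' * V_eval H R pol Pt (Suc h) s')"

definition robust_V where
  "robust_V H \<rho> R pol P h s = (INF Pt\<in>robust_kernels H \<rho> P. V_eval H R pol Pt h s)"

definition robust_Q where
  "robust_Q H \<rho> R pol P h s a = (INF Pt\<in>robust_kernels H \<rho> P. Q_eval H R pol Pt h s a)"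

end

theory Submission imports Defs begin
definition Tb :: "real \<Rightarrow> ('s::finite \<Rightarrow> real) \<Rightarrow> ('s \<Rightarrow> real) \<Rightarrow> real" where
  "Tb \<rho> p f = (INF q\<in>TV_ball \<rho> p. (\<Sum>x\<in>UNIV. q x * f x))"

primrec Wv :: "real \<Rightarrow> (nat \<Rightarrow> 's::finite \<Rightarrow> 'a::finite \<Rightarrow> real) \<Rightarrow> (nat \<Rightarrow> 's \<Rightarrow> 'a \<Rightarrow> real) \<Rightarrow>
   (nat \<Rightarrow> 's \<Rightarrow> 'a \<Rightarrow> 's \<Rightarrow> real) \<Rightarrow> nat \<Rightarrow> nat \<Rightarrow> 's \<Rightarrow> real" where
  "Wv \<rho> R pol P 0 h s = 0"
| "Wv \<rho> R pol P (Suc n) h s =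
     (\<Sum>a\<in>UNIV. pol h s a * (R h s a + Tb \<rho> (P h s a) (Wv \<rho> R pol P n (Suc h))))"

lemma dist_lo:
  fixes f :: "'s::finite \<Rightarrow> real"
  assumes "is_dist q" shows "Min (range f) \<le> (\<Sum>x\<in>UNIV. q x * f x)"
proof -
  have "Min (range f) = (\<Sum>x\<in>UNIV. q x * Min (range f))"
    using assms by (simp add: is_dist_def sum_distrib_right[symmetric])
  also have "\<dots> \<le> (\<Sum>x\<in>UNIV. q x * f x)"
    using assms by (intro sum_mono mult_left_mono) (auto simp: is_dist_def)
  finally show ?thesis .
qed

lemma dist_hi:
  fixes f :: "'s::finite \<Rightarrow> real"
  assumes "is_dist q" shows "(\<Sum>x\<in>UNIV. q x * f x) \<le> Max (range f)"
proof -
  have "(\<Sum>x\<in>UNIV. q x * f x) \<le> (\<Sum>x\<in>UNIV. q x * Max (range f))"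
    using assms by (intro sum_mono mult_left_mono) (auto simp: is_dist_def)
  also have "\<dots> = Max (range f)"
    using assms by (simp add: is_dist_def sum_distrib_right[symmetric])
  finally show ?thesis .
qed

lemma TV_self: "is_dist p \<Longrightarrow> 0 \<le> \<rho> \<Longrightarrow> p \<in> TV_ball \<rho> p"
  by (simp add: TV_ball_def)

lemma TV_mix:
  fixes p :: "'s::finite \<Rightarrow> real"
  assumes p: "is_dist p" and r: "0 \<le> \<rho>" "\<rho> \<le> 1"
  shows "(\<lambda>x. (1-\<rho>) * p x + \<rho> * (if x = y then 1 else 0)) \<in> TV_ball \<rho> p"
proof -
  let ?q = "\<lambda>x. (1-\<rho>) * p x + \<rho> * (if x = y then 1 else 0)"
  have d: "is_dist ?q"
    using p r unfolding is_dist_def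
    by (auto simp: sum.distrib sum_distrib_left[symmetric] intro!: add_nonneg_nonneg mult_nonneg_nonneg)
  have "(\<Sum>x\<in>UNIV. \<bar>?q x - p x\<bar>) = (\<Sum>x\<in>UNIV. \<rho> * \<bar>(if x = y then 1 else 0) - p x\<bar>)"
  proof (intro sum.cong refl)
    fix x
    have "?q x - p x = \<rho> * ((if x = y then 1 else 0) - p x)" by (simp add: algebra_simps)
    then show "\<bar>?q x - p x\<bar> = \<rho> * \<bar>(if x = y then 1 else 0) - p x\<bar>"
      using r by (simp add: abs_mult)
  qed
  also have "\<dots> \<le> (\<Sum>x\<in>UNIV. \<rho> * ((if x = y then 1 else 0) + p x))"
    using p r by (intro sum_mono mult_left_mono) (auto simp: is_dist_def abs_le_iff)
  also have "\<dots> = \<rho> * 2"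
    using p by (simp add: sum.distrib sum_distrib_left[symmetric] is_dist_def)
  finally show ?thesis using d by (simp add: TV_ball_def)
qed

lemma mix_sum:
  fixes p f :: "'s::finite \<Rightarrow> real"
  shows "(\<Sum>x\<in>UNIV. ((1-\<rho>) * p x + \<rho> * (if x = y then 1 else 0)) * f x)
        = (1-\<rho>) * (\<Sum>x\<in>UNIV. p x * f x) + \<rho> * f y"
proof -
  have "(\<Sum>x\<in>UNIV. ((1-\<rho>) * p x + \<rho> * (if x = y then 1 else 0)) * f x)
      = (\<Sum>x\<in>UNIV. (1-\<rho>) * (p x * f x) + \<rho> * (if x = y then f x else 0))"
    by (intro sum.cong) (auto simp: algebra_simps)
  also have "\<dots> = (1-\<rho>) * (\<Sum>x\<in>UNIV. p x * f x) + \<rho> * f y"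
    by (simp add: sum.distrib sum_distrib_left[symmetric])
  finally show ?thesis .
qed

lemma Tb_bdd:
  fixes f :: "'s::finite \<Rightarrow> real"
  shows "bdd_below ((\<lambda>q. \<Sum>x\<in>UNIV. q x * f x) ` TV_ball \<rho> p)"
  by (rule bdd_belowI[where m="Min (range f)"]) (auto simp: TV_ball_def intro: dist_lo)

lemma Tb_lo:
  fixes f :: "'s::finite \<Rightarrow> real"
  assumes "is_dist p" "0 \<le> \<rho>" shows "Min (range f) \<le> Tb \<rho> p f"
  unfolding Tb_def using assms
  by (intro cINF_greatest) (auto simp: TV_ball_def intro: dist_lo)

lemma Tb_le:
  fixes f :: "'s::finite \<Rightarrow> real"
  assumes "q \<in> TV_ball \<rho> p" shows "Tb \<rho> p f \<le> (\<Sum>x\<in>UNIV. q x * f x)"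
  unfolding Tb_def using assms by (intro cINF_lower Tb_bdd)

lemma Tb_approx:
  fixes f :: "'s::finite \<Rightarrow> real"
  assumes "is_dist p" "0 \<le> \<rho>" "e > 0"
  shows "\<exists>q\<in>TV_ball \<rho> p. (\<Sum>x\<in>UNIV. q x * f x) < Tb \<rho> p f + e"
proof -
  have "Tb \<rho> p f < Tb \<rho> p f + e" using assms by simp
  then show ?thesis unfolding Tb_def
    using cInf_less_iff[OF _ Tb_bdd] TV_self[OF assms(1,2)] by blast
qed

lemma Tb_hi:
  fixes f :: "'s::finite \<Rightarrow> real"
  assumes p: "is_dist p" and r: "0 \<le> \<rho>" "\<rho> \<le> 1"
  shows "Tb \<rho> p f \<le> (1-\<rho>) * Max (range f) + \<rho> * Min (range f)"
proof -
  obtain y where y: "f y = Min (range f)"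
    by (metis Min_in finite_UNIV finite_imageI imageE range_eqI empty_iff)
  have "Tb \<rho> p f \<le> (1-\<rho>) * (\<Sum>x\<in>UNIV. p x * f x) + \<rho> * f y"
    using Tb_le[OF TV_mix[OF p r, of y], of f] by (simp add: mix_sum)
  also have "\<dots> \<le> (1-\<rho>) * Max (range f) + \<rho> * Min (range f)"
    using dist_hi[OF p, of f] r y by (simp add: mult_left_mono)
  finally show ?thesis .
qed
lemma V_tail_local:
  "(\<And>i. i \<ge> h \<Longrightarrow> Pt i = Pt' i) \<Longrightarrow> V_tail R pol Pt n h s = V_tail R pol Pt' n h s"
proof (induction n arbitrary: h s)
  case 0 then show ?case by simp
next
  case (Suc n)
  have "\<And>s'. V_tail R pol Pt n (Suc h) s' = V_tail R pol Pt' n (Suc h) s'"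
    using Suc by (intro Suc.IH) auto
  then show ?case using Suc.prems by simp
qed

locale rmdp =
  fixes H :: nat and \<rho> :: real
    and R :: "nat \<Rightarrow> 's::finite \<Rightarrow> 'a::finite \<Rightarrow> real"
    and P :: "nat \<Rightarrow> 's \<Rightarrow> 'a \<Rightarrow> 's \<Rightarrow> real"
    and pol :: "nat \<Rightarrow> 's \<Rightarrow> 'a \<Rightarrow> real"
  assumes rho: "0 \<le> \<rho>" "\<rho> < 1"
    and R01: "\<And>i s a. i \<in> {1..H} \<Longrightarrow> 0 \<le> R i s a \<and> R i s a \<le> 1"
    and P_dist: "\<And>i s a. i \<in> {1..H} \<Longrightarrow> is_dist (P i s a)"
    and pol_dist: "\<And>i s. i \<in> {1..H} \<Longrightarrow> is_dist (pol i s)"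

context rmdp
begin

lemma P_in: "P \<in> robust_kernels H \<rho> P"
  using P_dist rho by (auto simp: robust_kernels_def intro: TV_self)

lemma claimA:
  assumes "Pt \<in> robust_kernels H \<rho> P" "1 \<le> h" "h + n \<le> H + 1"
  shows "Wv \<rho> R pol P n h s \<le> V_tail R pol Pt n h s"
  using assms(2,3)
proof (induction n arbitrary: h s)
  case 0 then show ?case by simp
next
  case (Suc n)
  have hH: "h \<in> {1..H}" using Suc.prems by auto
  have IH: "\<And>s'. Wv \<rho> R pol P n (Suc h) s' \<le> V_tail R pol Pt n (Suc h) s'"
    using Suc.prems by (intro Suc.IH) auto
  have "Tb \<rho> (P h s a) (Wv \<rho> R pol P n (Suc h))
        \<le> (\<Sum>s'\<in>UNIV. Pt h s a s' * V_tail R pol Pt n (Suc h) s')" for a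
  proof -
    have q: "Pt h s a \<in> TV_ball \<rho> (P h s a)" using assms(1) hH by (auto simp: robust_kernels_def)
    then have "is_dist (Pt h s a)" by (simp add: TV_ball_def)
    then have "(\<Sum>s'\<in>UNIV. Pt h s a s' * Wv \<rho> R pol P n (Suc h) s')
        \<le> (\<Sum>s'\<in>UNIV. Pt h s a s' * V_tail R pol Pt n (Suc h) s')"
      using IH by (intro sum_mono mult_left_mono) (auto simp: is_dist_def)
    then show ?thesis using Tb_le[OF q] by (meson order_trans)
  qed
  then show ?case
    using pol_dist[OF hH, of s]
    by (auto simp: is_dist_def intro!: sum_mono mult_left_mono)
qed

lemma claimB:
  assumes "1 \<le> h" "h + n \<le> H + 1" "e > 0"
  shows "\<exists>Pt\<in>robust_kernels H \<rho> P. \<forall>s. V_tail R pol Pt n h s \<le> Wv \<rho> R pol P n h s + e"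
  using assms
proof (induction n arbitrary: h e)
  case 0 then show ?case using P_in by auto
next
  case (Suc n)
  have hH: "h \<in> {1..H}" using Suc.prems by auto
  obtain Pt' where Pt': "Pt' \<in> robust_kernels H \<rho> P"
    "\<And>s. V_tail R pol Pt' n (Suc h) s \<le> Wv \<rho> R pol P n (Suc h) s + e/2"
    using Suc.IH[of "Suc h" "e/2"] Suc.prems by auto
  let ?W = "Wv \<rho> R pol P n (Suc h)"
  have "\<forall>s a. \<exists>q\<in>TV_ball \<rho> (P h s a). (\<Sum>x\<in>UNIV. q x * ?W x) < Tb \<rho> (P h s a) ?W + e/2"
    using Tb_approx[OF P_dist[OF hH] rho(1)] Suc.prems by simp
  then obtain qq where qq: "\<And>s a. qq s a \<in> TV_ball \<rho> (P h s a)"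
    "\<And>s a. (\<Sum>x\<in>UNIV. qq s a x * ?W x) < Tb \<rho> (P h s a) ?W + e/2"
    by metis
  define Pt where "Pt = Pt'(h := qq)"
  have Pt_in: "Pt \<in> robust_kernels H \<rho> P"
    using Pt'(1) qq(1) by (auto simp: robust_kernels_def Pt_def)
  have loc: "V_tail R pol Pt n (Suc h) s' = V_tail R pol Pt' n (Suc h) s'" for s'
    by (rule V_tail_local) (auto simp: Pt_def)
  have "V_tail R pol Pt (Suc n) h s \<le> Wv \<rho> R pol P (Suc n) h s + e" for s
  proof -
    have step: "(\<Sum>s'\<in>UNIV. qq s a s' * V_tail R pol Pt' n (Suc h) s')
         \<le> Tb \<rho> (P h s a) ?W + e" for a
    proof -
      have d: "is_dist (qq s a)" using qq(1) by (simp add: TV_ball_def)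
      have "(\<Sum>s'\<in>UNIV. qq s a s' * V_tail R pol Pt' n (Suc h) s')
          \<le> (\<Sum>s'\<in>UNIV. qq s a s' * (?W s' + e/2))"
        using d Pt'(2) by (intro sum_mono mult_left_mono) (auto simp: is_dist_def)
      also have "\<dots> = (\<Sum>s'\<in>UNIV. qq s a s' * ?W s') + e/2"
      proof -
        have "(\<Sum>s'\<in>UNIV. qq s a s' * (?W s' + e/2)) = (\<Sum>s'\<in>UNIV. qq s a s' * ?W s') + (\<Sum>s'\<in>UNIV. qq s a s') * (e/2)"
          by (simp only: distrib_left sum.distrib sum_distrib_right)
        then show ?thesis using d by (simp add: is_dist_def)
      qed
      finally show ?thesis using qq(2)[of s a] by linarith
    qed
    have "V_tail R pol Pt (Suc n) h s
        = (\<Sum>a\<in>UNIV. pol h s a * (R h s a + (\<Sum>s'\<in>UNIV. qq s a s' * V_tail R pol Pt' n (Suc h) s')))"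
      by (simp add: loc) (simp add: Pt_def)
    also have "\<dots> \<le> (\<Sum>a\<in>UNIV. pol h s a * (R h s a + Tb \<rho> (P h s a) ?W + e))"
      using pol_dist[OF hH, of s] step
      by (intro sum_mono mult_left_mono) (auto simp: is_dist_def)
    also have "\<dots> = Wv \<rho> R pol P (Suc n) h s + e"
    proof -
      have "(\<Sum>a\<in>UNIV. pol h s a * (R h s a + Tb \<rho> (P h s a) ?W + e))
          = (\<Sum>a\<in>UNIV. pol h s a * (R h s a + Tb \<rho> (P h s a) ?W)) + (\<Sum>a\<in>UNIV. pol h s a) * e"
        by (simp only: distrib_left sum.distrib sum_distrib_right)
      then show ?thesis using pol_dist[OF hH, of s] by (simp add: is_dist_def)
    qed
    finally show ?thesis .
  qed
  then show ?case using Pt_in by blast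
qed

lemma robust_V_eq:
  assumes "h \<in> {1..H}"
  shows "robust_V H \<rho> R pol P h s = Wv \<rho> R pol P (Suc H - h) h s"
proof -
  let ?n = "Suc H - h"
  have hn: "1 \<le> h" "h + ?n \<le> H + 1" using assms by auto
  have lo: "\<And>Pt. Pt \<in> robust_kernels H \<rho> P \<Longrightarrow> Wv \<rho> R pol P ?n h s \<le> V_eval H R pol Pt h s"
    unfolding V_eval_def using claimA[OF _ hn] by blast
  have bdd: "bdd_below ((\<lambda>Pt. V_eval H R pol Pt h s) ` robust_kernels H \<rho> P)"
    using lo by (intro bdd_belowI) auto
  have "Wv \<rho> R pol P ?n h s \<le> robust_V H \<rho> R pol P h s"
    unfolding robust_V_def using P_in lo by (intro cINF_greatest) auto
  moreover have "robust_V H \<rho> R pol P h s \<le> Wv \<rho> R pol P ?n h s"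
  proof (rule field_le_epsilon)
    fix e :: real assume "0 < e"
    then obtain Pt where "Pt \<in> robust_kernels H \<rho> P" "V_tail R pol Pt ?n h s \<le> Wv \<rho> R pol P ?n h s + e"
      using claimB[OF hn] by blast
    then show "robust_V H \<rho> R pol P h s \<le> Wv \<rho> R pol P ?n h s + e"
      unfolding robust_V_def V_eval_def
      using cINF_lower[OF bdd[unfolded V_eval_def]] by (meson order_trans)
  qed
  ultimately show ?thesis by simp
qed


lemma Wv_step_bounds:
  assumes hH: "h \<in> {1..H}"
  shows "Min (range (Wv \<rho> R pol P n (Suc h))) \<le> Wv \<rho> R pol P (Suc n) h s
       \<and> Wv \<rho> R pol P (Suc n) h s \<le> 1 + (1-\<rho>) * Max (range (Wv \<rho> R pol P n (Suc h)))
            + \<rho> * Min (range (Wv \<rho> R pol P n (Suc h)))"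
proof -
  let ?f = "Wv \<rho> R pol P n (Suc h)"
  let ?L = "Min (range ?f)" and ?U = "Max (range ?f)"
  have pd: "is_dist (pol h s)" using pol_dist[OF hH] .
  have r1: "\<rho> \<le> 1" using rho by simp
  have b: "?L \<le> R h s a + Tb \<rho> (P h s a) ?f \<and> R h s a + Tb \<rho> (P h s a) ?f \<le> 1 + (1-\<rho>) * ?U + \<rho> * ?L" for a
    using Tb_lo[OF P_dist[OF hH, of s a] rho(1), where f="?f"] Tb_hi[OF P_dist[OF hH, of s a] rho(1) r1, where f="?f"] rho R01[OF hH, of s a]
    by auto
  have "(\<Sum>a\<in>UNIV. pol h s a * ?L) \<le> Wv \<rho> R pol P (Suc n) h s"
    using pd b by (auto simp: is_dist_def intro!: sum_mono mult_left_mono)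
  moreover have "Wv \<rho> R pol P (Suc n) h s \<le> (\<Sum>a\<in>UNIV. pol h s a * (1 + (1-\<rho>) * ?U + \<rho> * ?L))"
    using pd b by (auto simp: is_dist_def intro!: sum_mono mult_left_mono)
  moreover have "(\<Sum>a\<in>UNIV. pol h s a * ?L) = ?L" "(\<Sum>a\<in>UNIV. pol h s a * (1 + (1-\<rho>) * ?U + \<rho> * ?L)) = 1 + (1-\<rho>) * ?U + \<rho> * ?L"
    using pd by (simp_all only: sum_distrib_right[symmetric] is_dist_def) simp_all
  ultimately show ?thesis by simp
qed

lemma span_le:
  fixes g :: "'b::finite \<Rightarrow> real"
  assumes "\<And>x. L \<le> g x" "\<And>x. g x \<le> U"
  shows "Max (range g) - Min (range g) \<le> U - L"
proof -
  have "Max (range g) \<le> U" using assms(2) by (subst Max_le_iff) auto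
  moreover have "L \<le> Min (range g)" using assms(1) by (subst Min_ge_iff) auto
  ultimately show ?thesis by linarith
qed

lemma span_ge0:
  fixes g :: "'b::finite \<Rightarrow> real"
  shows "Min (range g) \<le> Max (range g)"
  by (meson Max_ge Min_le finite_UNIV finite_imageI rangeI order_trans)

lemma recur_bound:
  fixes d :: real
  assumes "0 \<le> d" "d \<le> n" "\<rho> * d \<le> 1"
  shows "1 + (1-\<rho>) * d \<le> Suc n \<and> \<rho> * (1 + (1-\<rho>) * d) \<le> 1"
proof
  have "(1-\<rho>) * d \<le> d" using assms rho by (simp add: mult_le_cancel_right1 algebra_simps)
  then show "1 + (1-\<rho>) * d \<le> Suc n" using assms by simp
  have "\<rho> * (1 + (1-\<rho>) * d) = \<rho> + (1-\<rho>) * (\<rho> * d)" by (simp add: algebra_simps)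
  also have "\<dots> \<le> \<rho> + (1-\<rho>) * 1" using assms rho by (intro add_left_mono mult_left_mono) auto
  also have "\<dots> = 1" by simp
  finally show "\<rho> * (1 + (1-\<rho>) * d) \<le> 1" .
qed

lemma Wv_span:
  assumes "1 \<le> h" "h + n \<le> H + 1"
  shows "Max (range (Wv \<rho> R pol P n h)) - Min (range (Wv \<rho> R pol P n h)) \<le> n
       \<and> \<rho> * (Max (range (Wv \<rho> R pol P n h)) - Min (range (Wv \<rho> R pol P n h))) \<le> 1"
  using assms
proof (induction n arbitrary: h)
  case 0 then show ?case by simp
next
  case (Suc n)
  have hH: "h \<in> {1..H}" using Suc.prems by auto
  let ?f = "Wv \<rho> R pol P n (Suc h)"
  let ?L = "Min (range ?f)" and ?U = "Max (range ?f)"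
  have IH: "?U - ?L \<le> n \<and> \<rho> * (?U - ?L) \<le> 1" using Suc.prems by (intro Suc.IH) auto
  have sp: "Max (range (Wv \<rho> R pol P (Suc n) h)) - Min (range (Wv \<rho> R pol P (Suc n) h))
      \<le> (1 + (1-\<rho>) * ?U + \<rho> * ?L) - ?L"
    using Wv_step_bounds[OF hH] by (intro span_le) auto
  have eq: "(1 + (1-\<rho>) * ?U + \<rho> * ?L) - ?L = 1 + (1-\<rho>) * (?U - ?L)" by (simp add: algebra_simps)
  have r: "1 + (1-\<rho>) * (?U - ?L) \<le> Suc n \<and> \<rho> * (1 + (1-\<rho>) * (?U - ?L)) \<le> 1"
    using recur_bound[of "?U - ?L" n] IH span_ge0[of ?f] by simp
  show ?case
  proof
    show "Max (range (Wv \<rho> R pol P (Suc n) h)) - Min (range (Wv \<rho> R pol P (Suc n) h)) \<le> Suc n"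
      using sp eq r by linarith
    show "\<rho> * (Max (range (Wv \<rho> R pol P (Suc n) h)) - Min (range (Wv \<rho> R pol P (Suc n) h))) \<le> 1"
      using sp eq r rho(1) by (smt (verit) mult_left_mono)
  qed
qed

lemma robust_Q_bounds:
  assumes hH: "h \<in> {1..H}"
  shows "Min (range (Wv \<rho> R pol P (H - h) (Suc h))) \<le> robust_Q H \<rho> R pol P h s a
       \<and> robust_Q H \<rho> R pol P h s a \<le> 1 + (1-\<rho>) * Max (range (Wv \<rho> R pol P (H - h) (Suc h)))
            + \<rho> * Min (range (Wv \<rho> R pol P (H - h) (Suc h)))"
proof -
  let ?f = "Wv \<rho> R pol P (H - h) (Suc h)"
  let ?L = "Min (range ?f)" and ?U = "Max (range ?f)"
  have hn: "1 \<le> Suc h" "Suc h + (H - h) \<le> H + 1" using hH by auto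
  have Veq: "V_eval H R pol Pt (Suc h) s' = V_tail R pol Pt (H - h) (Suc h) s'" for Pt s'
    by (simp add: V_eval_def)
  have lo: "?L \<le> Q_eval H R pol Pt h s a" if Pt: "Pt \<in> robust_kernels H \<rho> P" for Pt
  proof -
    have d: "is_dist (Pt h s a)" using Pt hH by (auto simp: robust_kernels_def TV_ball_def)
    have "?L \<le> (\<Sum>s'\<in>UNIV. Pt h s a s' * ?f s')" by (rule dist_lo[OF d])
    also have "\<dots> \<le> (\<Sum>s'\<in>UNIV. Pt h s a s' * V_tail R pol Pt (H - h) (Suc h) s')"
      using d claimA[OF Pt hn] by (intro sum_mono mult_left_mono) (auto simp: is_dist_def)
    finally show ?thesis using R01[OF hH, of s a] by (simp add: Q_eval_def Veq)
  qed
  have bdd: "bdd_below ((\<lambda>Pt. Q_eval H R pol Pt h s a) ` robust_kernels H \<rho> P)"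
    using lo by (intro bdd_belowI) auto
  have "?L \<le> robust_Q H \<rho> R pol P h s a"
    unfolding robust_Q_def using P_in lo by (intro cINF_greatest) auto
  moreover have "robust_Q H \<rho> R pol P h s a \<le> 1 + (1-\<rho>) * ?U + \<rho> * ?L"
  proof (rule field_le_epsilon)
    fix e :: real assume "0 < e"
    then obtain Pt' where Pt': "Pt' \<in> robust_kernels H \<rho> P" "\<And>s'. V_tail R pol Pt' (H - h) (Suc h) s' \<le> ?f s' + e"
      using claimB[OF hn] by blast
    obtain y where y: "?f y = ?L"
      by (metis Min_in finite_UNIV finite_imageI imageE range_eqI empty_iff)
    define q where "q = (\<lambda>s a x. (1-\<rho>) * P h s a x + \<rho> * (if x = y then 1 else 0))"
    have qin: "q s a \<in> TV_ball \<rho> (P h s a)" for s a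
      unfolding q_def using TV_mix[OF P_dist[OF hH]] rho by simp
    define Pt where "Pt = Pt'(h := q)"
    have Pt_in: "Pt \<in> robust_kernels H \<rho> P"
      using Pt'(1) qin by (auto simp: robust_kernels_def Pt_def)
    have loc: "V_tail R pol Pt (H - h) (Suc h) s' = V_tail R pol Pt' (H - h) (Suc h) s'" for s'
      by (rule V_tail_local) (auto simp: Pt_def)
    have d: "is_dist (q s a)" using qin by (simp add: TV_ball_def)
    have "Q_eval H R pol Pt h s a = R h s a + (\<Sum>s'\<in>UNIV. q s a s' * V_tail R pol Pt' (H - h) (Suc h) s')"
      by (simp add: Q_eval_def Veq loc) (simp add: Pt_def)
    also have "\<dots> \<le> R h s a + (\<Sum>s'\<in>UNIV. q s a s' * (?f s' + e))"
      using d Pt'(2) by (intro add_left_mono sum_mono mult_left_mono) (auto simp: is_dist_def)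
    also have "(\<Sum>s'\<in>UNIV. q s a s' * (?f s' + e)) = (\<Sum>s'\<in>UNIV. q s a s' * ?f s') + (\<Sum>s'\<in>UNIV. q s a s') * e"
      by (simp only: distrib_left sum.distrib sum_distrib_right)
    also have "(\<Sum>s'\<in>UNIV. q s a s' * ?f s') = (1-\<rho>) * (\<Sum>x\<in>UNIV. P h s a x * ?f x) + \<rho> * ?f y"
      unfolding q_def by (rule mix_sum)
    also have "(\<Sum>s'\<in>UNIV. q s a s') = 1" using d by (simp add: is_dist_def)
    finally have "Q_eval H R pol Pt h s a \<le> R h s a + ((1-\<rho>) * (\<Sum>x\<in>UNIV. P h s a x * ?f x) + \<rho> * ?L + e)"
      using y by simp
    also have "\<dots> \<le> 1 + (1-\<rho>) * ?U + \<rho> * ?L + e"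
      using dist_hi[OF P_dist[OF hH, of s a], where f="?f"] rho R01[OF hH, of s a]
      by (smt (verit) mult_left_mono)
    finally have "Q_eval H R pol Pt h s a \<le> 1 + (1-\<rho>) * ?U + \<rho> * ?L + e" .
    then show "robust_Q H \<rho> R pol P h s a \<le> 1 + (1-\<rho>) * ?U + \<rho> * ?L + e"
      unfolding robust_Q_def using cINF_lower[OF bdd Pt_in] by linarith
  qed
  ultimately show ?thesis by simp
qed

end
theorem proposition4:
  fixes H :: nat and \<rho> :: real
    and R :: "nat \<Rightarrow> 's::finite \<Rightarrow> 'a::finite \<Rightarrow> real"
    and P :: "nat \<Rightarrow> 's \<Rightarrow> 'a \<Rightarrow> 's \<Rightarrow> real"
    and pol :: "nat \<Rightarrow> 's \<Rightarrow> 'a \<Rightarrow> real"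
    and h :: nat
  assumes rho: "0 \<le> \<rho>" "\<rho> < 1"
    and R01: "\<And>i s a. i \<in> {1..H} \<Longrightarrow> 0 \<le> R i s a \<and> R i s a \<le> 1"
    and P_dist: "\<And>i s a. i \<in> {1..H} \<Longrightarrow> is_dist (P i s a)"
    and pol_dist: "\<And>i s. i \<in> {1..H} \<Longrightarrow> is_dist (pol i s)"
    and h: "h \<in> {1..H}"
  shows "(MAX sa. robust_Q H \<rho> R pol P h (fst sa) (snd sa))
           - (MIN sa. robust_Q H \<rho> R pol P h (fst sa) (snd sa)) \<le> real H
       \<and> (\<rho> > 0 \<longrightarrow> (MAX sa. robust_Q H \<rho> R pol P h (fst sa) (snd sa))
           - (MIN sa. robust_Q H \<rho> R pol P h (fst sa) (snd sa)) \<le> 1 / \<rho>)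
       \<and> (MAX s. robust_V H \<rho> R pol P h s) - (MIN s. robust_V H \<rho> R pol P h s) \<le> real H
       \<and> (\<rho> > 0 \<longrightarrow> (MAX s. robust_V H \<rho> R pol P h s) - (MIN s. robust_V H \<rho> R pol P h s) \<le> 1 / \<rho>)"
proof -
  interpret M: rmdp H \<rho> R P pol
    using rho R01 P_dist pol_dist by unfold_locales auto
  let ?f = "Wv \<rho> R pol P (H - h) (Suc h)"
  let ?L = "Min (range ?f)" and ?U = "Max (range ?f)"
  let ?g = "\<lambda>sa. robust_Q H \<rho> R pol P h (fst sa) (snd sa)"
  let ?sQ = "Max (range ?g) - Min (range ?g)"
  let ?sV = "(MAX s. robust_V H \<rho> R pol P h s) - (MIN s. robust_V H \<rho> R pol P h s)"
  have hn: "1 \<le> Suc h" "Suc h + (H - h) \<le> H + 1" using h by auto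
  have sp: "?U - ?L \<le> (H - h) \<and> \<rho> * (?U - ?L) \<le> 1"
    using M.Wv_span[OF hn] .
  have rb: "1 + (1-\<rho>) * (?U - ?L) \<le> Suc (H - h) \<and> \<rho> * (1 + (1-\<rho>) * (?U - ?L)) \<le> 1"
    using M.recur_bound[where d="?U - ?L" and n="H - h"] sp M.span_ge0[where g="?f"] by simp
  have "?sQ \<le> (1 + (1-\<rho>) * ?U + \<rho> * ?L) - ?L"
    using M.robust_Q_bounds[OF h] by (intro M.span_le) auto
  also have "\<dots> = 1 + (1-\<rho>) * (?U - ?L)" by (simp add: algebra_simps)
  finally have Q1: "?sQ \<le> 1 + (1-\<rho>) * (?U - ?L)" .
  have SH: "real (Suc (H - h)) \<le> real H" using h by auto
  have Q2: "?sQ \<le> real H" using Q1 rb SH by linarith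
  have Q3: "\<rho> * ?sQ \<le> 1"
  proof -
    have "\<rho> * ?sQ \<le> \<rho> * (1 + (1-\<rho>) * (?U - ?L))" using Q1 rho by (intro mult_left_mono) auto
    then show ?thesis using rb by linarith
  qed
  have Veq: "(\<lambda>s. robust_V H \<rho> R pol P h s) = Wv \<rho> R pol P (Suc H - h) h"
    using M.robust_V_eq[OF h] by (intro ext) simp
  have hn2: "1 \<le> h" "h + (Suc H - h) \<le> H + 1" using h by auto
  have V: "?sV \<le> real (Suc H - h) \<and> \<rho> * ?sV \<le> 1"
    unfolding Veq using M.Wv_span[OF hn2] by simp
  have V2: "?sV \<le> real H" using V h by auto
  have pos: "\<rho> > 0 \<Longrightarrow> \<rho> * x \<le> 1 \<Longrightarrow> x \<le> 1 / \<rho>" for x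
    by (simp add: pos_le_divide_eq mult.commute)
  show ?thesis using Q2 Q3 V V2 pos by blast
qed
end
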